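(* Let $\mathbb{K}$ be an algebraically closed field of characteristic zero and $N=2m\ge 2$ even. Then $\operatorname{Der}(\mathcal{H}_{N})\cong \mathcal{H}_{N}$.
   Context: Let $A_N=\mathbb{K}[t_1^{\pm1},\dots,t_N^{\pm1}]$, $d_i=t_i\frac{\partial}{\partial t_i}$, and $t^{\bm r}=t_1^{r_1}\cdots t_N^{r_N}$ for $\bm r\in\mathbb{Z}^N$. Let $(\cdot,\cdot)$ be the standard bilinear form on $\mathbb{K}^N$, $(e_i,e_j)=\delta_{ij}$. For $u\in\mathbb{K}^N$, $\bm r\in\mathbb{Z}^N$ put $D(u,\bm r)=\sum_i u_i t^{\bm r}d_i$. Let $\bm J=\begin{pmatrix} O_m & I_m\\ -I_m & O_m\end{pmatrix}$, $\overline{\bm r}=\bm J\bm r$, $h_{\bm r}=D(\overline{\bm r},\bm r)$ (so $h_{\bm 0}=0$), $\mathfrak h=\operatorname{span}_{\mathbb{K}}\{d_1,\dots,d_N\}$. The Hamiltonian Lie algebra is $\mathcal{H}_N=\operatorname{span}_{\mathbb{K}}\{h_{\bm r}:\bm r\ne\bm 0\}\oplus\mathfrak h$ with commutator bracket, $[h_{\bm r},h_{\bm s}]=(\overline{\bm r},\bm s)h_{\bm r+\bm s}$, $[D(u,\bm 0),h_{\bm r}]=(u,\bm r)h_{\bm r}$. $\operatorname{Der}$ denotes the Lie algebra of derivations. *)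

theory Defs
  imports "HOL-Computational_Algebra.Polynomial"
begin

text \<open>An element sum_r f(r) h_r + D(u,0) is encoded as the pair (f, u), where
  f : Z^N -> K is finitely supported on nonzero lattice points (lattice points
  are functions nat => int vanishing at indices >= N) and u : nat => K
  vanishes at indices >= N.\<close>

type_synonym 'k ham = "((nat \<Rightarrow> int) \<Rightarrow> 'k) \<times> (nat \<Rightarrow> 'k)"

definition lattice :: "nat \<Rightarrow> (nat \<Rightarrow> int) set" where
  "lattice N = {r. \<forall>i\<ge>N. r i = 0}"

text \<open>(J r, s) for J = [[0, I_m],[-I_m, 0]], i.e. (rbar, s).\<close>
definition Jpair :: "nat \<Rightarrow> (nat \<Rightarrow> int) \<Rightarrow> (nat \<Rightarrow> int) \<Rightarrow> int" where
  "Jpair m r s = (\<Sum>i<m. r (i + m) * s i - r i * s (i + m))"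

definition upair :: "nat \<Rightarrow> (nat \<Rightarrow> 'k::field) \<Rightarrow> (nat \<Rightarrow> int) \<Rightarrow> 'k" where
  "upair N u s = (\<Sum>i<N. u i * of_int (s i))"

definition ham_carrier :: "nat \<Rightarrow> ('k::field) ham set" where
  "ham_carrier m = {(f, u).
      finite {r. f r \<noteq> 0} \<and>
      (\<forall>r. f r \<noteq> 0 \<longrightarrow> r \<in> lattice (2*m) \<and> r \<noteq> (\<lambda>_. 0)) \<and>
      (\<forall>i\<ge>2*m. u i = 0)}"

definition ham_zero :: "('k::field) ham" where
  "ham_zero = (\<lambda>_. 0, \<lambda>_. 0)"

definition ham_add :: "('k::field) ham \<Rightarrow> 'k ham \<Rightarrow> 'k ham" where
  "ham_add x y = (\<lambda>r. fst x r + fst y r, \<lambda>i. snd x i + snd y i)"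

definition ham_scale :: "'k::field \<Rightarrow> 'k ham \<Rightarrow> 'k ham" where
  "ham_scale c x = (\<lambda>r. c * fst x r, \<lambda>i. c * snd x i)"

text \<open>Lie bracket: [h_r, h_s] = (rbar, s) h_(r+s) (with h_0 = 0),
  [D(u,0), h_r] = (u, r) h_r, [D(u,0), D(v,0)] = 0, extended bilinearly.\<close>
definition ham_bracket :: "nat \<Rightarrow> ('k::field) ham \<Rightarrow> 'k ham \<Rightarrow> 'k ham" where
  "ham_bracket m x y =
     (\<lambda>s. if s = (\<lambda>_. 0) then 0 else
            (\<Sum>r\<in>{r. fst x r \<noteq> 0}. fst x r * fst y (\<lambda>i. s i - r i) * of_int (Jpair m r (\<lambda>i. s i - r i)))
            + upair (2*m) (snd x) s * fst y s - upair (2*m) (snd y) s * fst x s,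
      \<lambda>_. 0)"

text \<open>Derivations of H_N: linear maps of the carrier into itself satisfying the
  Leibniz rule; they are taken extensional (zero outside the carrier) so that
  they are determined by their values on H_N.\<close>
definition ham_derivations :: "nat \<Rightarrow> (('k::field) ham \<Rightarrow> 'k ham) set" where
  "ham_derivations m = {D.
     (\<forall>x\<in>ham_carrier m. D x \<in> ham_carrier m) \<and>
     (\<forall>x\<in>ham_carrier m. \<forall>y\<in>ham_carrier m. \<forall>a b.
         D (ham_add (ham_scale a x) (ham_scale b y)) = ham_add (ham_scale a (D x)) (ham_scale b (D y))) \<and>
     (\<forall>x\<in>ham_carrier m. \<forall>y\<in>ham_carrier m.
         D (ham_bracket m x y) = ham_add (ham_bracket m (D x) y) (ham_bracket m x (D y))) \<and>
     (\<forall>x. x \<notin> ham_carrier m \<longrightarrow> D x = ham_zero)}"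

definition der_add :: "nat \<Rightarrow> (('k::field) ham \<Rightarrow> 'k ham) \<Rightarrow> ('k ham \<Rightarrow> 'k ham) \<Rightarrow> ('k ham \<Rightarrow> 'k ham)" where
  "der_add m D E = (\<lambda>x. if x \<in> ham_carrier m then ham_add (D x) (E x) else ham_zero)"

definition der_scale :: "nat \<Rightarrow> 'k::field \<Rightarrow> ('k ham \<Rightarrow> 'k ham) \<Rightarrow> ('k ham \<Rightarrow> 'k ham)" where
  "der_scale m c D = (\<lambda>x. if x \<in> ham_carrier m then ham_scale c (D x) else ham_zero)"

definition der_bracket :: "nat \<Rightarrow> (('k::field) ham \<Rightarrow> 'k ham) \<Rightarrow> ('k ham \<Rightarrow> 'k ham) \<Rightarrow> ('k ham \<Rightarrow> 'k ham)" where
  "der_bracket m D E = (\<lambda>x. if x \<in> ham_carrier m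
       then ham_add (D (E x)) (ham_scale (-1) (E (D x))) else ham_zero)"

definition der_ham_iso :: "nat \<Rightarrow> ((('k::field) ham \<Rightarrow> 'k ham) \<Rightarrow> 'k ham) \<Rightarrow> bool" where
  "der_ham_iso m \<phi> \<longleftrightarrow>
     bij_betw \<phi> (ham_derivations m) (ham_carrier m) \<and>
     (\<forall>D\<in>ham_derivations m. \<forall>E\<in>ham_derivations m. \<forall>a b.
        \<phi> (der_add m (der_scale m a D) (der_scale m b E)) = ham_add (ham_scale a (\<phi> D)) (ham_scale b (\<phi> E))) \<and>
     (\<forall>D\<in>ham_derivations m. \<forall>E\<in>ham_derivations m.
        \<phi> (der_bracket m D E) = ham_bracket m (\<phi> D) (\<phi> E))"

end

theory Submission
  imports Defs
begin

definition hb :: "(nat \<Rightarrow> int) \<Rightarrow> 'k::field ham" where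
  "hb r = (\<lambda>s. if s = r \<and> r \<noteq> (\<lambda>_. 0) then 1 else 0, \<lambda>_. 0)"
definition db :: "nat \<Rightarrow> 'k::field ham" where
  "db i = (\<lambda>_. 0, \<lambda>j. if j = i then 1 else 0)"
definition ad :: "nat \<Rightarrow> 'k::field ham \<Rightarrow> ('k ham \<Rightarrow> 'k ham)" where
  "ad m x = (\<lambda>y. if y \<in> ham_carrier m then ham_bracket m x y else ham_zero)"
definition unitv :: "nat \<Rightarrow> nat \<Rightarrow> int" where
  "unitv j = (\<lambda>i. if i = j then 1 else 0)"

lemma carrierD:
  assumes "x \<in> ham_carrier m"
  shows "finite {r. fst x r \<noteq> 0}" "\<And>r. fst x r \<noteq> 0 \<Longrightarrow> r \<in> lattice (2*m)"
    "\<And>r. fst x r \<noteq> 0 \<Longrightarrow> r \<noteq> (\<lambda>_. 0)" "\<And>i. i \<ge> 2*m \<Longrightarrow> snd x i = 0"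
  using assms by (auto simp: ham_carrier_def split: prod.splits)

lemma carrier_fst_zero:
  assumes "x \<in> ham_carrier m" "r \<notin> lattice (2*m) \<or> r = (\<lambda>_. 0)"
  shows "fst x r = 0"
  using carrierD[OF assms(1)] assms(2) by blast

lemma carrierI:
  assumes "finite {r. fst x r \<noteq> 0}" "\<And>r. fst x r \<noteq> 0 \<Longrightarrow> r \<in> lattice (2*m) \<and> r \<noteq> (\<lambda>_. 0)"
    "\<And>i. i \<ge> 2*m \<Longrightarrow> snd x i = 0"
  shows "x \<in> ham_carrier m"
  using assms by (cases x) (auto simp: ham_carrier_def)

lemma zero_C[simp]: "ham_zero \<in> ham_carrier m"
  by (rule carrierI) (auto simp: ham_zero_def)

lemma add_C[simp]:
  assumes "x \<in> ham_carrier m" "y \<in> ham_carrier m"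
  shows "ham_add x y \<in> ham_carrier m"
proof (rule carrierI)
  have "{r. fst (ham_add x y) r \<noteq> 0} \<subseteq> {r. fst x r \<noteq> 0} \<union> {r. fst y r \<noteq> 0}"
    by (auto simp: ham_add_def)
  then show "finite {r. fst (ham_add x y) r \<noteq> 0}"
    using carrierD(1)[OF assms(1)] carrierD(1)[OF assms(2)] by (meson finite_UnI finite_subset)
  show "fst (ham_add x y) r \<noteq> 0 \<Longrightarrow> r \<in> lattice (2*m) \<and> r \<noteq> (\<lambda>_. 0)" for r
    using carrier_fst_zero[OF assms(1), of r] carrier_fst_zero[OF assms(2), of r]
    by (cases "r \<in> lattice (2*m) \<and> r \<noteq> (\<lambda>_. 0)") (auto simp: ham_add_def)
  show "2*m \<le> i \<Longrightarrow> snd (ham_add x y) i = 0" for i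
    using carrierD[OF assms(1)] carrierD[OF assms(2)] by (auto simp: ham_add_def)
qed

lemma scale_C[simp]:
  assumes "x \<in> ham_carrier m"
  shows "ham_scale a x \<in> ham_carrier m"
proof (rule carrierI)
  have "{r. fst (ham_scale a x) r \<noteq> 0} \<subseteq> {r. fst x r \<noteq> 0}"
    by (auto simp: ham_scale_def)
  then show "finite {r. fst (ham_scale a x) r \<noteq> 0}"
    using carrierD(1)[OF assms(1)] by (meson finite_subset)
  show "fst (ham_scale a x) r \<noteq> 0 \<Longrightarrow> r \<in> lattice (2*m) \<and> r \<noteq> (\<lambda>_. 0)" for r
    using carrierD[OF assms(1)] by (auto simp: ham_scale_def)
  show "2*m \<le> i \<Longrightarrow> snd (ham_scale a x) i = 0" for i
    using carrierD[OF assms(1)] by (auto simp: ham_scale_def)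
qed

lemma hb_C[simp]: "r \<in> lattice (2*m) \<Longrightarrow> hb r \<in> ham_carrier m"
  by (rule carrierI) (auto simp: hb_def split: if_splits)

lemma db_C[simp]: "i < 2*m \<Longrightarrow> db i \<in> ham_carrier m"
  by (rule carrierI) (auto simp: db_def)

lemma lattice_add[simp]: "r \<in> lattice N \<Longrightarrow> s \<in> lattice N \<Longrightarrow> (\<lambda>i. r i + s i) \<in> lattice N"
  by (auto simp: lattice_def)
lemma lattice_diff[simp]: "r \<in> lattice N \<Longrightarrow> s \<in> lattice N \<Longrightarrow> (\<lambda>i. r i - s i) \<in> lattice N"
  by (auto simp: lattice_def)
lemma lattice_uminus[simp]: "r \<in> lattice N \<Longrightarrow> (\<lambda>i. - r i) \<in> lattice N"
  by (auto simp: lattice_def)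
lemma lattice_zero[simp]: "(\<lambda>_. 0) \<in> lattice N"
  by (auto simp: lattice_def)
lemma unitv_lattice[simp]: "j < N \<Longrightarrow> unitv j \<in> lattice N"
  by (auto simp: lattice_def unitv_def)
lemma unitv_nz[simp]: "unitv j \<noteq> (\<lambda>_. 0)"
  by (auto simp: unitv_def fun_eq_iff)

lemma bracket_snd[simp]: "snd (ham_bracket m x y) = (\<lambda>_. 0)"
  by (simp add: ham_bracket_def)

lemma bracket_fst_S:
  assumes "finite S" "{r. fst x r \<noteq> 0} \<subseteq> S"
  shows "fst (ham_bracket m x y) s = (if s = (\<lambda>_. 0) then 0 else
     (\<Sum>r\<in>S. fst x r * fst y (\<lambda>i. s i - r i) * of_int (Jpair m r (\<lambda>i. s i - r i)))
     + upair (2*m) (snd x) s * fst y s - upair (2*m) (snd y) s * fst x s)"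
proof -
  have "(\<Sum>r\<in>{r. fst x r \<noteq> 0}. fst x r * fst y (\<lambda>i. s i - r i) * of_int (Jpair m r (\<lambda>i. s i - r i)))
      = (\<Sum>r\<in>S. fst x r * fst y (\<lambda>i. s i - r i) * of_int (Jpair m r (\<lambda>i. s i - r i)))"
    by (rule sum.mono_neutral_left) (use assms in auto)
  then show ?thesis by (simp add: ham_bracket_def)
qed

lemma bracket_C[simp]:
  assumes "x \<in> ham_carrier m" "y \<in> ham_carrier m"
  shows "ham_bracket m x y \<in> ham_carrier m"
proof (rule carrierI)
  let ?X = "{r. fst x r \<noteq> 0}" and ?Y = "{r. fst y r \<noteq> 0}"
  have fx: "finite ?X" and fy: "finite ?Y" using carrierD(1)[OF assms(1)] carrierD(1)[OF assms(2)] by auto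
  have "{s. fst (ham_bracket m x y) s \<noteq> 0} \<subseteq> (\<lambda>(a,b). \<lambda>i. a i + b i) ` (?X \<times> ?Y) \<union> ?X \<union> ?Y"
  proof
    fix s assume "s \<in> {s. fst (ham_bracket m x y) s \<noteq> 0}"
    then have ne: "fst (ham_bracket m x y) s \<noteq> 0" by simp
    show "s \<in> (\<lambda>(a,b). \<lambda>i. a i + b i) ` (?X \<times> ?Y) \<union> ?X \<union> ?Y"
    proof (rule ccontr)
      assume nin: "s \<notin> (\<lambda>(a,b). \<lambda>i. a i + b i) ` (?X \<times> ?Y) \<union> ?X \<union> ?Y"
      then have "fst x s = 0" "fst y s = 0" by auto
      moreover have hz: "fst y (\<lambda>i. s i - r i) = 0" if "fst x r \<noteq> 0" for r
      proof (rule ccontr)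
        assume "fst y (\<lambda>i. s i - r i) \<noteq> 0"
        then have "s \<in> (\<lambda>(a,b). \<lambda>i. a i + b i) ` (?X \<times> ?Y)"
          using that by (intro image_eqI[of _ _ "(r, \<lambda>i. s i - r i)"]) auto
        with nin show False by blast
      qed
      ultimately have "fst (ham_bracket m x y) s = 0"
        by (auto simp: ham_bracket_def hz intro!: sum.neutral)
      with ne show False by simp
    qed
  qed
  moreover have "finite ((\<lambda>(a,b). \<lambda>i. a i + b i) ` (?X \<times> ?Y) \<union> ?X \<union> ?Y)" using fx fy by auto
  ultimately show "finite {s. fst (ham_bracket m x y) s \<noteq> 0}" by (rule finite_subset)
  show "fst (ham_bracket m x y) r \<noteq> 0 \<Longrightarrow> r \<in> lattice (2*m) \<and> r \<noteq> (\<lambda>_. 0)" for r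
  proof
    assume ne: "fst (ham_bracket m x y) r \<noteq> 0"
    then show "r \<noteq> (\<lambda>_. 0)" by (auto simp: ham_bracket_def)
    show "r \<in> lattice (2*m)"
    proof (rule ccontr)
      assume nl: "r \<notin> lattice (2*m)"
      have "fst x r = 0" "fst y r = 0" using nl carrier_fst_zero assms by blast+
      moreover have "fst y (\<lambda>i. r i - q i) = 0" if "fst x q \<noteq> 0" for q
      proof -
        have q: "q \<in> lattice (2*m)" using carrierD(2)[OF assms(1) that] .
        have "(\<lambda>i. r i - q i) \<notin> lattice (2*m)"
        proof
          assume "(\<lambda>i. r i - q i) \<in> lattice (2*m)"
          then show False using nl q by (auto simp: lattice_def)
        qed
        then show ?thesis using carrier_fst_zero assms(2) by blast
      qed
      ultimately have "fst (ham_bracket m x y) r = 0"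
        by (auto simp: ham_bracket_def intro!: sum.neutral)
      with ne show False by simp
    qed
  qed
  show "2*m \<le> i \<Longrightarrow> snd (ham_bracket m x y) i = 0" for i by simp
qed



lemma upair_add[simp]: "upair N (\<lambda>i. u i + v i) s = upair N u s + upair N v s"
  by (simp add: upair_def sum.distrib algebra_simps)
lemma upair_scale[simp]: "upair N (\<lambda>i. a * u i) s = a * upair N u s"
  by (simp add: upair_def sum_distrib_left algebra_simps)
lemma upair_zero[simp]: "upair N (\<lambda>_. 0) s = 0"
  by (simp add: upair_def)
lemma upair_db[simp]: "i < N \<Longrightarrow> upair N (snd (db i)) s = of_int (s i)"
proof -
  have eq: "(\<lambda>j. (if j = i then 1 else 0) * (of_int (s j) :: 'a)) = (\<lambda>j. if j = i then of_int (s j) else 0)"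
    by auto
  show "i < N \<Longrightarrow> ?thesis" unfolding upair_def db_def snd_conv eq by simp
qed
lemma upair_unitv[simp]: "j < N \<Longrightarrow> upair N u (unitv j) = u j"
  by (simp add: upair_def unitv_def if_distrib cong: if_cong)

lemma support_add_sub: "{r. fst (ham_add x y) r \<noteq> 0} \<subseteq> {r. fst x r \<noteq> 0} \<union> {r. fst y r \<noteq> 0}"
  by (auto simp: ham_add_def)
lemma support_scale_sub: "{r. fst (ham_scale a x) r \<noteq> 0} \<subseteq> {r. fst x r \<noteq> 0}"
  by (auto simp: ham_scale_def)

lemma br_add_left[simp]:
  assumes "x \<in> ham_carrier m" "y \<in> ham_carrier m"
  shows "ham_bracket m (ham_add x y) z = ham_add (ham_bracket m x z) (ham_bracket m y z)"
proof -
  let ?S = "{r. fst x r \<noteq> 0} \<union> {r. fst y r \<noteq> 0}"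
  have fS: "finite ?S" using carrierD(1)[OF assms(1)] carrierD(1)[OF assms(2)] by auto
  note e = bracket_fst_S[OF fS]
  have "fst (ham_bracket m (ham_add x y) z) s = fst (ham_add (ham_bracket m x z) (ham_bracket m y z)) s" for s
    apply (subst e, rule support_add_sub)
    apply (simp add: ham_add_def e sum.distrib algebra_simps)
    done
  then show ?thesis by (simp add: prod_eq_iff fun_eq_iff ham_add_def)
qed

lemma br_scale_left[simp]:
  assumes "x \<in> ham_carrier m"
  shows "ham_bracket m (ham_scale a x) z = ham_scale a (ham_bracket m x z)"
proof -
  let ?S = "{r. fst x r \<noteq> 0}"
  have fS: "finite ?S" using carrierD(1)[OF assms(1)] by auto
  note e = bracket_fst_S[OF fS]
  have "fst (ham_bracket m (ham_scale a x) z) s = fst (ham_scale a (ham_bracket m x z)) s" for s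
    apply (subst e, rule support_scale_sub)
    apply (simp add: ham_scale_def)
    apply (simp add: e[of x] sum_distrib_left algebra_simps)
    done
  then show ?thesis by (simp add: prod_eq_iff fun_eq_iff ham_scale_def)
qed

lemma br_add_right[simp]:
  "ham_bracket m x (ham_add y z) = ham_add (ham_bracket m x y) (ham_bracket m x z)"
  by (simp add: ham_bracket_def ham_add_def prod_eq_iff fun_eq_iff sum.distrib algebra_simps)

lemma br_scale_right[simp]:
  "ham_bracket m x (ham_scale a y) = ham_scale a (ham_bracket m x y)"
  by (simp add: ham_bracket_def ham_scale_def prod_eq_iff fun_eq_iff sum_distrib_left algebra_simps)

lemma br_zero_left[simp]: "ham_bracket m ham_zero y = ham_zero"
  by (simp add: ham_bracket_def ham_zero_def fun_eq_iff)
lemma br_zero_right[simp]: "ham_bracket m x ham_zero = ham_zero"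
  by (simp add: ham_bracket_def ham_zero_def fun_eq_iff)

lemma Jpair_add1[simp]: "Jpair m (\<lambda>i. r i + s i) t = Jpair m r t + Jpair m s t"
  by (simp add: Jpair_def sum.distrib[symmetric] algebra_simps)
lemma Jpair_add2[simp]: "Jpair m r (\<lambda>i. s i + t i) = Jpair m r s + Jpair m r t"
  by (simp add: Jpair_def sum.distrib[symmetric] algebra_simps)
lemma Jpair_lin2: "Jpair m r (\<lambda>i. s i + n * t i) = Jpair m r s + n * Jpair m r t"
  by (simp add: Jpair_def sum.distrib[symmetric] sum_distrib_left algebra_simps)
lemma Jpair_diff2[simp]: "Jpair m r (\<lambda>i. s i - t i) = Jpair m r s - Jpair m r t"
  by (simp add: Jpair_def sum_subtractf[symmetric] algebra_simps)
lemma Jpair_anti: "Jpair m r s = - Jpair m s r"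
  by (simp add: Jpair_def sum_negf[symmetric] algebra_simps)
lemma Jpair_self[simp]: "Jpair m r r = 0"
  using Jpair_anti[of m r r] by simp
lemma Jpair_zero1[simp]: "Jpair m (\<lambda>_. 0) r = 0"
  by (simp add: Jpair_def)
lemma Jpair_zero2[simp]: "Jpair m r (\<lambda>_. 0) = 0"
  by (simp add: Jpair_def)



lemma fst_hb: "fst (hb r) t = (if t = r \<and> r \<noteq> (\<lambda>_. 0) then 1 else 0)"
  by (simp add: hb_def)
lemma snd_hb[simp]: "snd (hb r) = (\<lambda>_. 0)"
  by (simp add: hb_def)
lemma fst_db[simp]: "fst (db i) = (\<lambda>_. 0)"
  by (simp add: db_def)

lemma diff_eq_iff: "((\<lambda>i. t i - r i) = (s::nat\<Rightarrow>int)) \<longleftrightarrow> (t = (\<lambda>i. r i + s i))"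
proof
  assume h: "(\<lambda>i. t i - r i) = s"
  show "t = (\<lambda>i. r i + s i)"
  proof
    fix i show "t i = r i + s i" using fun_cong[OF h, of i] by simp
  qed
next
  assume "t = (\<lambda>i. r i + s i)" then show "(\<lambda>i. t i - r i) = s" by force
qed

lemma br_hb_hb:
  "ham_bracket m (hb r) (hb s) = ham_scale (of_int (Jpair m r s)) (hb (\<lambda>i. r i + s i))"
proof -
  have sub: "{q. fst (hb r) q \<noteq> 0} \<subseteq> {r}" by (auto simp: fst_hb split: if_splits)
  have *: "fst (ham_bracket m (hb r) (hb s)) t = fst (ham_scale (of_int (Jpair m r s)) (hb (\<lambda>i. r i + s i))) t" for t
    apply (subst bracket_fst_S[OF _ sub], simp)
    apply (cases "r = (\<lambda>_. 0)"; cases "s = (\<lambda>_. 0)"; cases "t = (\<lambda>i. r i + s i)")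
           apply (auto simp: fst_hb ham_scale_def diff_eq_iff)
    done
  show ?thesis by (rule prod_eqI[OF ext[OF *]]) (simp add: ham_scale_def)
qed

lemma br_db_hb:
  assumes "i < 2*m"
  shows "ham_bracket m (db i) (hb s) = ham_scale (of_int (s i)) (hb s)"
proof -
  have *: "fst (ham_bracket m (db i) (hb s)) t = fst (ham_scale (of_int (s i)) (hb s)) t" for t
    apply (subst bracket_fst_S[of "{}"], simp, simp)
    using assms apply (auto simp: fst_hb ham_scale_def)
    done
  show ?thesis by (rule prod_eqI[OF ext[OF *]]) (simp add: ham_scale_def)
qed

lemma br_hb_db:
  assumes "j < 2*m"
  shows "ham_bracket m (hb r) (db j) = ham_scale (- of_int (r j)) (hb r)"
proof -
  have sub: "{q. fst (hb r) q \<noteq> 0} \<subseteq> {r}" by (auto simp: fst_hb split: if_splits)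
  have *: "fst (ham_bracket m (hb r) (db j)) t = fst (ham_scale (- of_int (r j)) (hb r)) t" for t
    apply (subst bracket_fst_S[OF _ sub], simp)
    using assms apply (auto simp: fst_hb ham_scale_def)
    done
  show ?thesis by (rule prod_eqI[OF ext[OF *]]) (simp add: ham_scale_def)
qed

lemma br_db_db: "ham_bracket m (db i) (db j) = ham_zero"
  by (simp add: ham_bracket_def ham_zero_def fun_eq_iff)

lemma br_X_db:
  assumes "X \<in> ham_carrier m" "j < 2*m"
  shows "ham_bracket m X (db j) = (\<lambda>t. - of_int (t j) * fst X t, \<lambda>_. 0)"
proof -
  have *: "fst (ham_bracket m X (db j)) t = - of_int (t j) * fst X t" for t
    apply (subst bracket_fst_S[OF carrierD(1)[OF assms(1)]], simp)
    using assms carrier_fst_zero[OF assms(1), of t] apply auto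
    done
  show ?thesis by (rule prod_eqI) (simp_all add: fun_eq_iff *)
qed

lemma br_db_X:
  assumes "X \<in> ham_carrier m" "i < 2*m"
  shows "ham_bracket m (db i) X = (\<lambda>t. of_int (t i) * fst X t, \<lambda>_. 0)"
proof -
  have *: "fst (ham_bracket m (db i) X) t = of_int (t i) * fst X t" for t
    apply (subst bracket_fst_S[of "{}"], simp, simp)
    using assms carrier_fst_zero[OF assms(1), of t] apply auto
    done
  show ?thesis by (rule prod_eqI) (simp_all add: fun_eq_iff *)
qed

lemma br_v_X:
  assumes "X \<in> ham_carrier m"
  shows "ham_bracket m (\<lambda>_. 0, v) X = (\<lambda>t. upair (2*m) v t * fst X t, \<lambda>_. 0)"
proof -
  have *: "fst (ham_bracket m (\<lambda>_. 0, v) X) t = upair (2*m) v t * fst X t" for t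
    apply (subst bracket_fst_S[of "{}"], simp, simp)
    using assms carrier_fst_zero[OF assms(1), of t] apply auto
    done
  show ?thesis by (rule prod_eqI) (simp_all add: fun_eq_iff *)
qed



lemma span_induct[consumes 1, case_names zero hb db]:
  assumes x: "x \<in> ham_carrier m"
  and z: "P ham_zero"
  and h: "\<And>r a y. r \<in> lattice (2*m) \<Longrightarrow> r \<noteq> (\<lambda>_. 0) \<Longrightarrow> y \<in> ham_carrier m \<Longrightarrow> P y
            \<Longrightarrow> P (ham_add y (ham_scale a (hb r)))"
  and d: "\<And>i a y. i < 2*m \<Longrightarrow> y \<in> ham_carrier m \<Longrightarrow> P y \<Longrightarrow> P (ham_add y (ham_scale a (db i)))"
  shows "P x"
proof -
  obtain f u where xfu: "x = (f,u)" by (cases x)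
  have fx: "finite {r. f r \<noteq> 0}" using carrierD(1)[OF x] xfu by simp
  have nz: "f r \<noteq> 0 \<Longrightarrow> r \<in> lattice (2*m) \<and> r \<noteq> (\<lambda>_. 0)" for r
    using carrierD(2,3)[OF x] xfu by auto
  have su: "i \<ge> 2*m \<Longrightarrow> u i = 0" for i using carrierD(4)[OF x] xfu by auto
  have c1: "S \<subseteq> {r. f r \<noteq> 0} \<Longrightarrow> P (\<lambda>r. if r \<in> S then f r else 0, \<lambda>_. 0) \<and>
      (\<lambda>r. if r \<in> S then f r else 0, \<lambda>_. 0) \<in> ham_carrier m" if "finite S" for S
    using that
  proof (induction S rule: finite_induct)
    case empty
    have "(\<lambda>r. if r \<in> {} then f r else 0, \<lambda>_. 0) = ham_zero" by (simp add: ham_zero_def)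
    then show ?case using z by simp
  next
    case (insert r S)
    let ?y = "(\<lambda>q. if q \<in> S then f q else 0, \<lambda>_. 0)"
    have IH: "P ?y \<and> ?y \<in> ham_carrier m" using insert by auto
    have r: "r \<in> lattice (2*m)" "r \<noteq> (\<lambda>_. 0)" using insert.prems nz by auto
    have eq: "(\<lambda>q. if q \<in> insert r S then f q else 0, \<lambda>_. 0) = ham_add ?y (ham_scale (f r) (hb r))"
    proof (rule prod_eqI, rule ext)
      fix q show "fst (\<lambda>q. if q \<in> insert r S then f q else 0, \<lambda>_. 0) q =
        fst (ham_add ?y (ham_scale (f r) (hb r))) q"
        using insert.hyps(2) r by (cases "q = r") (auto simp: ham_add_def ham_scale_def hb_def)
    qed (simp add: ham_add_def ham_scale_def hb_def)
    show ?case unfolding eq using h[OF r IH[THEN conjunct2] IH[THEN conjunct1]] IH r by simp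
  qed
  have "(\<lambda>r. if r \<in> {r. f r \<noteq> 0} then f r else 0) = f" by auto
  then have base: "P (f, \<lambda>_. 0) \<and> (f, \<lambda>_. 0) \<in> ham_carrier m" using c1[OF fx] by simp
  have c2: "k \<le> 2*m \<Longrightarrow> P (f, \<lambda>i. if i < k then u i else 0) \<and> (f, \<lambda>i. if i < k then u i else 0) \<in> ham_carrier m" for k
  proof (induction k)
    case 0
    then show ?case using base by simp
  next
    case (Suc k)
    let ?y = "(f, \<lambda>i. if i < k then u i else 0)"
    have IH: "P ?y \<and> ?y \<in> ham_carrier m" using Suc by auto
    have k: "k < 2*m" using Suc by simp
    have eq: "(f, \<lambda>i. if i < Suc k then u i else 0) = ham_add ?y (ham_scale (u k) (db k))"
      by (auto simp: ham_add_def ham_scale_def db_def fun_eq_iff less_Suc_eq)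
    show ?case unfolding eq using d[OF k IH[THEN conjunct2] IH[THEN conjunct1]] IH k by simp
  qed
  have "(\<lambda>i. if i < 2*m then u i else 0) = u" using su by (auto simp: fun_eq_iff)
  then show ?thesis using c2[of "2*m"] xfu by simp
qed

definition jac :: "nat \<Rightarrow> 'k::field ham \<Rightarrow> 'k ham \<Rightarrow> 'k ham \<Rightarrow> bool" where
  "jac m x y z \<longleftrightarrow> ham_bracket m x (ham_bracket m y z) =
     ham_add (ham_bracket m (ham_bracket m x y) z) (ham_bracket m y (ham_bracket m x z))"

lemma jac_z:
  assumes "x \<in> ham_carrier m" "y \<in> ham_carrier m"
    "\<And>r. r \<in> lattice (2*m) \<Longrightarrow> r \<noteq> (\<lambda>_. 0) \<Longrightarrow> jac m x y (hb r)"
    "\<And>i. i < 2*m \<Longrightarrow> jac m x y (db i)"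
    "z \<in> ham_carrier m"
  shows "jac m x y z"
  using assms(5)
proof (induction z rule: span_induct)
  case zero
  then show ?case by (simp add: jac_def, simp add: ham_add_def ham_zero_def)
next
  case (hb r a w)
  then show ?case using assms(3)[of r] assms(1,2)
    apply (simp add: jac_def)
    apply (simp add: ham_add_def ham_scale_def prod_eq_iff fun_eq_iff algebra_simps)
    done
next
  case (db i a w)
  then show ?case using assms(4)[of i] assms(1,2)
    apply (simp add: jac_def)
    apply (simp add: ham_add_def ham_scale_def prod_eq_iff fun_eq_iff algebra_simps)
    done
qed

lemma jac_y:
  assumes "x \<in> ham_carrier m" "z \<in> ham_carrier m"
    "\<And>r. r \<in> lattice (2*m) \<Longrightarrow> r \<noteq> (\<lambda>_. 0) \<Longrightarrow> jac m x (hb r) z"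
    "\<And>i. i < 2*m \<Longrightarrow> jac m x (db i) z"
    "y \<in> ham_carrier m"
  shows "jac m x y z"
  using assms(5)
proof (induction y rule: span_induct)
  case zero
  then show ?case by (simp add: jac_def, simp add: ham_add_def ham_zero_def)
next
  case (hb r a w)
  then show ?case using assms(3)[of r] assms(1,2)
    apply (simp add: jac_def)
    apply (simp add: ham_add_def ham_scale_def prod_eq_iff fun_eq_iff algebra_simps)
    done
next
  case (db i a w)
  then show ?case using assms(4)[of i] assms(1,2)
    apply (simp add: jac_def)
    apply (simp add: ham_add_def ham_scale_def prod_eq_iff fun_eq_iff algebra_simps)
    done
qed

lemma jac_x:
  assumes "y \<in> ham_carrier m" "z \<in> ham_carrier m"
    "\<And>r. r \<in> lattice (2*m) \<Longrightarrow> r \<noteq> (\<lambda>_. 0) \<Longrightarrow> jac m (hb r) y z"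
    "\<And>i. i < 2*m \<Longrightarrow> jac m (db i) y z"
    "x \<in> ham_carrier m"
  shows "jac m x y z"
  using assms(5)
proof (induction x rule: span_induct)
  case zero
  then show ?case by (simp add: jac_def, simp add: ham_add_def ham_zero_def)
next
  case (hb r a w)
  then show ?case using assms(3)[of r] assms(1,2)
    apply (simp add: jac_def)
    apply (simp add: ham_add_def ham_scale_def prod_eq_iff fun_eq_iff algebra_simps)
    done
next
  case (db i a w)
  then show ?case using assms(4)[of i] assms(1,2)
    apply (simp add: jac_def)
    apply (simp add: ham_add_def ham_scale_def prod_eq_iff fun_eq_iff algebra_simps)
    done
qed

lemmas brs = br_hb_hb br_db_hb br_hb_db br_db_db

lemma jac_hhh: "r \<in> lattice (2*m) \<Longrightarrow> s \<in> lattice (2*m) \<Longrightarrow> t \<in> lattice (2*m) \<Longrightarrow>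
  jac m (hb r) (hb s) (hb t)"
  apply (simp add: jac_def brs add.assoc)
  apply (simp add: ham_add_def ham_scale_def prod_eq_iff fun_eq_iff algebra_simps Jpair_anti[of m s r])
  done
lemma jac_dhh: "i < 2*m \<Longrightarrow> s \<in> lattice (2*m) \<Longrightarrow> t \<in> lattice (2*m) \<Longrightarrow>
  jac m (db i) (hb s) (hb t)"
  apply (simp add: jac_def brs add.assoc)
  apply (simp add: ham_add_def ham_scale_def prod_eq_iff fun_eq_iff algebra_simps)
  done
lemma jac_hdh: "r \<in> lattice (2*m) \<Longrightarrow> i < 2*m \<Longrightarrow> t \<in> lattice (2*m) \<Longrightarrow>
  jac m (hb r) (db i) (hb t)"
  apply (simp add: jac_def brs add.assoc)
  apply (simp add: ham_add_def ham_scale_def prod_eq_iff fun_eq_iff algebra_simps)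
  done
lemma jac_hhd: "r \<in> lattice (2*m) \<Longrightarrow> s \<in> lattice (2*m) \<Longrightarrow> j < 2*m \<Longrightarrow>
  jac m (hb r) (hb s) (db j)"
  apply (simp add: jac_def brs add.assoc)
  apply (simp add: ham_add_def ham_scale_def prod_eq_iff fun_eq_iff algebra_simps Jpair_anti[of m s r])
  done
lemma jac_ddh: "i < 2*m \<Longrightarrow> j < 2*m \<Longrightarrow> t \<in> lattice (2*m) \<Longrightarrow>
  jac m (db i) (db j) (hb t)"
  apply (simp add: jac_def brs add.assoc)
  apply (simp add: ham_add_def ham_scale_def ham_zero_def prod_eq_iff fun_eq_iff algebra_simps)
  done
lemma jac_dhd: "i < 2*m \<Longrightarrow> s \<in> lattice (2*m) \<Longrightarrow> j < 2*m \<Longrightarrow>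
  jac m (db i) (hb s) (db j)"
  apply (simp add: jac_def brs add.assoc)
  apply (simp add: ham_add_def ham_scale_def ham_zero_def prod_eq_iff fun_eq_iff algebra_simps)
  done
lemma jac_hdd: "r \<in> lattice (2*m) \<Longrightarrow> i < 2*m \<Longrightarrow> j < 2*m \<Longrightarrow>
  jac m (hb r) (db i) (db j)"
  apply (simp add: jac_def brs add.assoc)
  apply (simp add: ham_add_def ham_scale_def ham_zero_def prod_eq_iff fun_eq_iff algebra_simps)
  done
lemma jac_ddd: "i < 2*m \<Longrightarrow> j < 2*m \<Longrightarrow> k < 2*m \<Longrightarrow>
  jac m (db i) (db j) (db k)"
  apply (simp add: jac_def brs add.assoc)
  apply (simp add: ham_add_def ham_scale_def ham_zero_def prod_eq_iff fun_eq_iff algebra_simps)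
  done

lemma jacobi:
  assumes "x \<in> ham_carrier m" "y \<in> ham_carrier m" "z \<in> ham_carrier m"
  shows "ham_bracket m x (ham_bracket m y z) =
     ham_add (ham_bracket m (ham_bracket m x y) z) (ham_bracket m y (ham_bracket m x z))"
proof -
  have "jac m x y z"
  proof (rule jac_x[OF assms(2,3) _ _ assms(1)])
    fix r assume r: "r \<in> lattice (2*m)" "r \<noteq> (\<lambda>_. 0)"
    show "jac m (hb r) y z"
    proof (rule jac_y[OF _ assms(3) _ _ assms(2)])
      show "hb r \<in> ham_carrier m" using r by simp
      fix s assume s: "s \<in> lattice (2*m)" "s \<noteq> (\<lambda>_. 0)"
      show "jac m (hb r) (hb s) z"
        by (rule jac_z[OF _ _ _ _ assms(3)]) (use r s in \<open>auto intro: jac_hhh jac_hhd\<close>)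
    next
      fix i assume i: "i < 2*m"
      show "jac m (hb r) (db i) z"
        by (rule jac_z[OF _ _ _ _ assms(3)]) (use r i in \<open>auto intro: jac_hdh jac_hdd\<close>)
    qed
  next
    fix i assume i: "i < 2*m"
    show "jac m (db i) y z"
    proof (rule jac_y[OF _ assms(3) _ _ assms(2)])
      show "db i \<in> ham_carrier m" using i by simp
      fix s assume s: "s \<in> lattice (2*m)" "s \<noteq> (\<lambda>_. 0)"
      show "jac m (db i) (hb s) z"
        by (rule jac_z[OF _ _ _ _ assms(3)]) (use i s in \<open>auto intro: jac_dhh jac_dhd\<close>)
    next
      fix j assume j: "j < 2*m"
      show "jac m (db i) (db j) z"
        by (rule jac_z[OF _ _ _ _ assms(3)]) (use i j in \<open>auto intro: jac_ddh jac_ddd\<close>)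
    qed
  qed
  then show ?thesis by (simp add: jac_def)
qed



lemma der_C[simp]: "D \<in> ham_derivations m \<Longrightarrow> x \<in> ham_carrier m \<Longrightarrow> D x \<in> ham_carrier m"
  unfolding ham_derivations_def by blast
lemma der_lin: "D \<in> ham_derivations m \<Longrightarrow> x \<in> ham_carrier m \<Longrightarrow> y \<in> ham_carrier m \<Longrightarrow>
   D (ham_add (ham_scale a x) (ham_scale b y)) = ham_add (ham_scale a (D x)) (ham_scale b (D y))"
  unfolding ham_derivations_def by blast
lemma der_leib: "D \<in> ham_derivations m \<Longrightarrow> x \<in> ham_carrier m \<Longrightarrow> y \<in> ham_carrier m \<Longrightarrow>
   D (ham_bracket m x y) = ham_add (ham_bracket m (D x) y) (ham_bracket m x (D y))"
  unfolding ham_derivations_def by blast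
lemma der_out: "D \<in> ham_derivations m \<Longrightarrow> x \<notin> ham_carrier m \<Longrightarrow> D x = ham_zero"
  unfolding ham_derivations_def by blast

lemma scale_one[simp]: "ham_scale 1 x = x"
  by (simp add: ham_scale_def)
lemma add_scale_zero[simp]: "ham_add x (ham_scale 0 y) = x"
  by (simp add: ham_scale_def ham_add_def)

lemma der_add: "D \<in> ham_derivations m \<Longrightarrow> x \<in> ham_carrier m \<Longrightarrow> y \<in> ham_carrier m \<Longrightarrow>
   D (ham_add x y) = ham_add (D x) (D y)"
  using der_lin[of D m x y 1 1] by simp
lemma der_scale: "D \<in> ham_derivations m \<Longrightarrow> x \<in> ham_carrier m \<Longrightarrow>
   D (ham_scale a x) = ham_scale a (D x)"
  using der_lin[of D m x x a 0] by simp
lemma der_zero: "D \<in> ham_derivations m \<Longrightarrow> D ham_zero = ham_zero"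
proof -
  assume D: "D \<in> ham_derivations m"
  have 1: "D (ham_scale 0 ham_zero) = ham_scale 0 (D ham_zero)" by (rule der_scale[OF D zero_C])
  have 2: "ham_scale 0 (ham_zero :: 'a ham) = ham_zero" by (simp add: ham_scale_def ham_zero_def)
  have 3: "ham_scale 0 (D ham_zero) = ham_zero" by (simp add: ham_scale_def ham_zero_def)
  show ?thesis using 1 unfolding 2 3 .
qed

lemma ad_der: fixes x :: "'k::field ham" assumes "x \<in> ham_carrier m" shows "ad m x \<in> ham_derivations m"
  unfolding ham_derivations_def
proof (intro CollectI conjI ballI allI impI)
  fix y z :: "'k ham" assume "y \<in> ham_carrier m" "z \<in> ham_carrier m"
  then show "ad m x (ham_bracket m y z) = ham_add (ham_bracket m (ad m x y) z) (ham_bracket m y (ad m x z))"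
    using assms jacobi[of x m y z] by (simp add: ad_def)
qed (use assms in \<open>auto simp: ad_def\<close>)

lemma der_comb:
  fixes D E :: "'k::field ham \<Rightarrow> 'k ham"
  assumes D: "D \<in> ham_derivations m" and E: "E \<in> ham_derivations m"
  shows "der_add m (der_scale m a D) (der_scale m b E) \<in> ham_derivations m"
proof -
  let ?F = "der_add m (der_scale m a D) (der_scale m b E)"
  have F: "?F y = ham_add (ham_scale a (D y)) (ham_scale b (E y))" if "y \<in> ham_carrier m" for y
    using that by (simp add: der_add_def der_scale_def)
  show ?thesis unfolding ham_derivations_def
  proof (intro CollectI conjI ballI allI impI)
    fix x :: "'k ham" assume x: "x \<in> ham_carrier m"
    then show "?F x \<in> ham_carrier m" using F D E by simp
  next
    fix x y :: "'k ham" and c d assume x: "x \<in> ham_carrier m" and y: "y \<in> ham_carrier m"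
    show "?F (ham_add (ham_scale c x) (ham_scale d y)) = ham_add (ham_scale c (?F x)) (ham_scale d (?F y))"
      using x y D E
      apply (simp add: F der_lin)
      apply (simp add: ham_add_def ham_scale_def prod_eq_iff fun_eq_iff algebra_simps)
      done
  next
    fix x y :: "'k ham" assume x: "x \<in> ham_carrier m" and y: "y \<in> ham_carrier m"
    show "?F (ham_bracket m x y) = ham_add (ham_bracket m (?F x) y) (ham_bracket m x (?F y))"
      using x y D E
      apply (simp add: F der_leib)
      apply (simp add: ham_add_def ham_scale_def prod_eq_iff fun_eq_iff algebra_simps)
      done
  next
    fix x :: "'k ham" assume "x \<notin> ham_carrier m"
    then show "?F x = ham_zero" by (simp add: der_add_def)
  qed
qed

lemma ad_inj:
  fixes x y :: "'k::field_char_0 ham"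
  assumes x: "x \<in> ham_carrier m" and y: "y \<in> ham_carrier m" and eq: "ad m x = ad m y"
  shows "x = y"
proof -
  have br: "ham_bracket m x z = ham_bracket m y z" if "z \<in> ham_carrier m" for z
    using fun_cong[OF eq, of z] that by (simp add: ad_def)
  have f: "fst x t = fst y t" for t
  proof (cases "t \<in> lattice (2*m) \<and> t \<noteq> (\<lambda>_. 0)")
    case True
    then obtain j where j: "t j \<noteq> 0" by (meson ext)
    have jlt: "j < 2*m"
    proof (rule ccontr)
      assume "\<not> j < 2*m" then have "t j = 0" using True by (simp add: lattice_def)
      with j show False by simp
    qed
    have e1: "ham_bracket m x (db j) = ham_bracket m y (db j)" using br[of "db j"] jlt by simp
    then have "(\<lambda>t. - of_int (t j) * fst x t, \<lambda>_. 0) = ((\<lambda>t. - of_int (t j) * fst y t, \<lambda>_. 0) :: 'k ham)"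
      unfolding br_X_db[OF x jlt] br_X_db[OF y jlt] .
    then have "- of_int (t j) * fst x t = - of_int (t j) * fst y t" by (simp add: fun_eq_iff)
    then show ?thesis using j by simp
  next
    case False
    have "fst x t = 0" by (rule carrier_fst_zero[OF x]) (use False in auto)
    moreover have "fst y t = 0" by (rule carrier_fst_zero[OF y]) (use False in auto)
    ultimately show ?thesis by simp
  qed
  then have fx: "fst x = fst y" by (rule ext)
  have s: "snd x j = snd y j" for j
  proof (cases "j < 2*m")
    case True
    have "fst (ham_bracket m x (hb (unitv j))) (unitv j) = fst (ham_bracket m y (hb (unitv j))) (unitv j)"
      using br[of "hb (unitv j)"] True by simp
    then show ?thesis using True by (simp add: ham_bracket_def fx fst_hb)
  next
    case False
    then show ?thesis using carrierD(4)[OF x] carrierD(4)[OF y] by simp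
  qed
  show ?thesis using fx s by (simp add: prod_eq_iff fun_eq_iff)
qed

lemma der_ad_comb:
  assumes "x \<in> ham_carrier m" "y \<in> ham_carrier m"
  shows "der_add m (der_scale m a (ad m x)) (der_scale m b (ad m y)) = ad m (ham_add (ham_scale a x) (ham_scale b y))"
  using assms by (auto simp: fun_eq_iff der_add_def der_scale_def ad_def)

lemma der_ad_bracket:
  assumes "x \<in> ham_carrier m" "y \<in> ham_carrier m"
  shows "der_bracket m (ad m x) (ad m y) = ad m (ham_bracket m x y)"
proof
  fix z
  show "der_bracket m (ad m x) (ad m y) z = ad m (ham_bracket m x y) z"
  proof (cases "z \<in> ham_carrier m")
    case True
    then show ?thesis using assms
      apply (simp add: der_bracket_def ad_def jacobi[of x m y z])
      apply (simp add: ham_add_def ham_scale_def prod_eq_iff fun_eq_iff algebra_simps)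
      done
  qed (simp add: der_bracket_def ad_def)
qed



lemma Jpair_unitv_low:
  assumes "j < m" shows "Jpair m r (unitv j) = r (j + m)"
proof -
  have "(\<Sum>i<m. r (i + m) * unitv j i - r i * unitv j (i + m)) = (\<Sum>i<m. if i = j then r (j + m) else 0)"
    by (rule sum.cong) (use assms in \<open>auto simp: unitv_def\<close>)
  then show ?thesis using assms by (simp add: Jpair_def)
qed

lemma Jpair_unitv_high:
  assumes "j < m" shows "Jpair m r (unitv (j + m)) = - r j"
proof -
  have "(\<Sum>i<m. r (i + m) * unitv (j + m) i - r i * unitv (j + m) (i + m)) = (\<Sum>i<m. if i = j then - r j else 0)"
    by (rule sum.cong) (use assms in \<open>auto simp: unitv_def\<close>)
  then show ?thesis using assms by (simp add: Jpair_def)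
qed

lemma Jpair_scale2[simp]: "Jpair m r (\<lambda>i. n * t i) = n * Jpair m r t"
  by (simp add: Jpair_def sum_distrib_left algebra_simps)

lemma nz_coord:
  assumes "r \<in> lattice N" "r \<noteq> (\<lambda>_. 0)"
  obtains k where "k < N" "r k \<noteq> 0"
proof -
  obtain k where k: "r k \<noteq> 0" using assms(2) by (meson ext)
  have "k < N"
  proof (rule ccontr)
    assume "\<not> k < N" then have "r k = 0" using assms(1) by (simp add: lattice_def)
    with k show False by simp
  qed
  then show ?thesis using k that by blast
qed

lemma Jpair_exists_unitv:
  assumes "r \<in> lattice (2*m)" "r \<noteq> (\<lambda>_. 0)"
  shows "\<exists>j<2*m. Jpair m r (unitv j) \<noteq> 0"
proof -
  obtain k where k: "k < 2*m" "r k \<noteq> 0" using nz_coord[OF assms] by blast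
  show ?thesis
  proof (cases "k < m")
    case True
    then have "Jpair m r (unitv (k + m)) = - r k" by (rule Jpair_unitv_high)
    then show ?thesis using k True by (intro exI[of _ "k + m"]) auto
  next
    case False
    then have km: "k - m < m" "k - m + m = k" using k by auto
    have "Jpair m r (unitv (k - m)) = r k" using Jpair_unitv_low[OF km(1)] km(2) by simp
    then show ?thesis using k by (intro exI[of _ "k - m"]) auto
  qed
qed

lemma fin_lin:
  assumes "(a::int) \<noteq> 0 \<or> b \<noteq> 0"
  shows "finite {n::int. a + n * b = 0}"
proof (cases "b = 0")
  case True
  then show ?thesis using assms by simp
next
  case False
  have "{n::int. a + n * b = 0} \<subseteq> {(- a) div b}"
  proof
    fix n assume "n \<in> {n::int. a + n * b = 0}"
    then have "n * b = - a" by simp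
    then have "n = (- a) div b" using False by (metis nonzero_mult_div_cancel_right)
    then show "n \<in> {(- a) div b}" by simp
  qed
  then show ?thesis by (rule finite_subset) simp
qed

lemma avoid:
  assumes "finite R"
  shows "(\<forall>r\<in>R. r \<in> lattice (2*m) \<and> r \<noteq> (\<lambda>_. 0)) \<Longrightarrow> \<exists>t\<in>lattice (2*m). \<forall>r\<in>R. Jpair m r t \<noteq> 0"
  using assms
proof (induction R rule: finite_induct)
  case empty
  then show ?case by (intro bexI[of _ "\<lambda>_. 0"]) auto
next
  case (insert r R)
  then obtain t where t: "t \<in> lattice (2*m)" "\<forall>q\<in>R. Jpair m q t \<noteq> 0" by auto
  have r: "r \<in> lattice (2*m)" "r \<noteq> (\<lambda>_. 0)" using insert.prems by auto
  obtain j where j: "j < 2*m" "Jpair m r (unitv j) \<noteq> 0" using Jpair_exists_unitv[OF r] by blast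
  let ?B = "{n. Jpair m r t + n * Jpair m r (unitv j) = 0} \<union> (\<Union>q\<in>R. {n. Jpair m q t + n * Jpair m q (unitv j) = 0})"
  have "finite ?B"
    using fin_lin j(2) t(2) insert.hyps(1) by auto
  then obtain n where n: "n \<notin> ?B" using ex_new_if_finite[OF infinite_UNIV_int] by blast
  let ?t = "\<lambda>i. t i + n * unitv j i"
  have "?t \<in> lattice (2*m)" using t(1) j(1) by (auto simp: lattice_def unitv_def)
  moreover have "\<forall>q\<in>insert r R. Jpair m q ?t \<noteq> 0"
    using n by (auto simp: Jpair_lin2)
  ultimately show ?case by blast
qed

lemma full_additive:
  fixes c :: "(nat \<Rightarrow> int) \<Rightarrow> 'k::field"
  assumes P: "\<And>r s. r \<in> lattice (2*m) \<Longrightarrow> s \<in> lattice (2*m) \<Longrightarrow> r \<noteq> (\<lambda>_. 0) \<Longrightarrow> s \<noteq> (\<lambda>_. 0)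
     \<Longrightarrow> (\<lambda>i. r i + s i) \<noteq> (\<lambda>_. 0) \<Longrightarrow> Jpair m r s \<noteq> 0 \<Longrightarrow> c (\<lambda>i. r i + s i) = c r + c s"
  and r: "r \<in> lattice (2*m)" "r \<noteq> (\<lambda>_. 0)" and s: "s \<in> lattice (2*m)" "s \<noteq> (\<lambda>_. 0)"
  and rs: "(\<lambda>i. r i + s i) \<noteq> (\<lambda>_. 0)"
  shows "c (\<lambda>i. r i + s i) = c r + c s"
proof (cases "Jpair m r s = 0")
  case False
  then show ?thesis using P r s rs by blast
next
  case True
  obtain t where t: "t \<in> lattice (2*m)" "\<forall>q\<in>{r, s, \<lambda>i. r i + s i}. Jpair m q t \<noteq> 0"
    using avoid[of "{r, s, \<lambda>i. r i + s i}" m] r s rs by auto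
  have Jrt: "Jpair m r t \<noteq> 0" and Jst: "Jpair m s t \<noteq> 0" and Jrst: "Jpair m (\<lambda>i. r i + s i) t \<noteq> 0"
    using t(2) by auto
  have t0: "t \<noteq> (\<lambda>_. 0)" using Jrt by auto
  have st0: "(\<lambda>i. s i + t i) \<noteq> (\<lambda>_. 0)"
  proof
    assume h: "(\<lambda>i. s i + t i) = (\<lambda>_. 0)"
    have "Jpair m s (\<lambda>i. s i + t i) = Jpair m s t" by simp
    then show False using h Jst by simp
  qed
  have rst0: "(\<lambda>i. (r i + s i) + t i) \<noteq> (\<lambda>_. 0)"
  proof
    assume h: "(\<lambda>i. (r i + s i) + t i) = (\<lambda>_. 0)"
    have "Jpair m (\<lambda>i. r i + s i) (\<lambda>i. (r i + s i) + t i) = Jpair m (\<lambda>i. r i + s i) t"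
      by (simp add: Jpair_anti[of m s r])
    then show False using h Jrst by simp
  qed
  have e1: "c (\<lambda>i. (r i + s i) + t i) = c (\<lambda>i. r i + s i) + c t"
    using P[of "\<lambda>i. r i + s i" t] r s t rs t0 rst0 Jrst by simp
  have "Jpair m r (\<lambda>i. s i + t i) = Jpair m r t" using True by simp
  then have e2: "c (\<lambda>i. r i + (s i + t i)) = c r + c (\<lambda>i. s i + t i)"
    using P[of r "\<lambda>i. s i + t i"] r s t st0 rst0 Jrt by (simp add: add.assoc)
  have e3: "c (\<lambda>i. s i + t i) = c s + c t"
    using P[of s t] s t t0 st0 Jst by simp
  have "(\<lambda>i. (r i + s i) + t i) = (\<lambda>i. r i + (s i + t i))" by (simp add: add.assoc)
  then show ?thesis using e1 e2 e3 by simp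
qed



lemma neg_aux: "(A::'a::ab_group_add) = R + R \<Longrightarrow> B = A + R \<Longrightarrow> A = B + N \<Longrightarrow> N = - R"
proof -
  assume a: "A = R + R" "B = A + R" "A = B + N"
  have h: "R + R = (R + R + R) + N" using a by metis
  have "(R + R) + 0 = (R + R) + (R + N)" by (metis h add.assoc add_0_right)
  then have "0 = R + N" by (simp only: add_left_cancel)
  then show "N = - R" by (simp add: eq_neg_iff_add_eq_0 add.commute)
qed

lemma c_linear:
  fixes c :: "(nat \<Rightarrow> int) \<Rightarrow> 'k::field"
  assumes add: "\<And>r s. r \<in> lattice (2*m) \<Longrightarrow> s \<in> lattice (2*m) \<Longrightarrow> r \<noteq> (\<lambda>_. 0) \<Longrightarrow> s \<noteq> (\<lambda>_. 0)
     \<Longrightarrow> (\<lambda>i. r i + s i) \<noteq> (\<lambda>_. 0) \<Longrightarrow> c (\<lambda>i. r i + s i) = c r + c s"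
  shows "\<exists>u. (\<forall>i\<ge>2*m. u i = 0) \<and> (\<forall>r\<in>lattice (2*m). r \<noteq> (\<lambda>_. 0) \<longrightarrow> c r = upair (2*m) u r)"
proof -
  define c0 where "c0 r = (if r = (\<lambda>_. 0) then 0 else c r)" for r
  have neg: "c (\<lambda>i. - r i) = - c r" if r: "r \<in> lattice (2*m)" "r \<noteq> (\<lambda>_. 0)" for r
  proof -
    obtain k where k: "r k \<noteq> 0" using r(2) by (meson ext)
    let ?r2 = "\<lambda>i. r i + r i" and ?r3 = "\<lambda>i. (r i + r i) + r i" and ?n = "\<lambda>i. - r i"
    have n2: "?r2 \<noteq> (\<lambda>_. 0)" using k by (auto dest: fun_cong[of _ _ k])
    have n3: "?r3 \<noteq> (\<lambda>_. 0)" using k by (auto dest: fun_cong[of _ _ k])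
    have nn: "?n \<noteq> (\<lambda>_. 0)" using k by (auto dest: fun_cong[of _ _ k])
    have l2: "?r2 \<in> lattice (2*m)" and l3: "?r3 \<in> lattice (2*m)" and ln: "?n \<in> lattice (2*m)"
      using r by (auto simp: lattice_def)
    have e1: "c ?r2 = c r + c r" using add[of r r] r n2 by simp
    have e2: "c ?r3 = c ?r2 + c r" using add[OF l2 r(1) n2 r(2) n3] .
    have eq: "(\<lambda>i. ?r3 i + ?n i) = ?r2" by simp
    have e3: "c (\<lambda>i. ?r3 i + ?n i) = c ?r3 + c ?n" using add[OF l3 ln n3 nn] n2 eq by simp
    then have e4: "c ?r2 = c ?r3 + c ?n" by (simp only: eq)
    show ?thesis by (rule neg_aux[OF e1 e2 e4])
  qed
  have c0_add: "c0 (\<lambda>i. r i + s i) = c0 r + c0 s" if r: "r \<in> lattice (2*m)" and s: "s \<in> lattice (2*m)" for r s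
  proof (cases "r = (\<lambda>_. 0)")
    case True then show ?thesis by (simp add: c0_def)
  next
    case rn: False
    show ?thesis
    proof (cases "s = (\<lambda>_. 0)")
      case True then show ?thesis using rn by (simp add: c0_def)
    next
      case sn: False
      show ?thesis
      proof (cases "(\<lambda>i. r i + s i) = (\<lambda>_. 0)")
        case True
        have "s = (\<lambda>i. - r i)"
        proof
          fix i have "r i + s i = 0" using fun_cong[OF True, of i] by simp
          then show "s i = - r i" by simp
        qed
        then show ?thesis using True rn sn neg[OF r rn] by (simp add: c0_def)
      next
        case False
        then show ?thesis using add[OF r s rn sn False] rn sn by (simp add: c0_def)
      qed
    qed
  qed
  have c0_zero: "c0 (\<lambda>_. 0) = 0" by (simp add: c0_def)
  have c0_nat: "c0 (\<lambda>i. int n * v i) = of_nat n * c0 v" if v: "v \<in> lattice (2*m)" for v n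
  proof (induction n)
    case 0 then show ?case by (simp add: c0_def)
  next
    case (Suc n)
    have vn: "(\<lambda>i. int n * v i) \<in> lattice (2*m)" using v by (auto simp: lattice_def)
    have "(\<lambda>i. int (Suc n) * v i) = (\<lambda>i. int n * v i + v i)" by (simp add: algebra_simps)
    then show ?case using c0_add[OF vn v] Suc by (simp add: algebra_simps)
  qed
  have c0_int: "c0 (\<lambda>i. z * v i) = of_int z * c0 v" if v: "v \<in> lattice (2*m)" for v z
  proof (cases "z \<ge> 0")
    case True
    obtain n where "z = int n" using True by (intro that[of "nat z"]) simp
    then show ?thesis using c0_nat[OF v, of n] by simp
  next
    case False
    obtain n where zn: "z = - int n" using False by (intro that[of "nat (- z)"]) simp
    have w: "(\<lambda>i. int n * v i) \<in> lattice (2*m)" using v by (auto simp: lattice_def)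
    have w2: "(\<lambda>i. - int n * v i) \<in> lattice (2*m)" using v by (auto simp: lattice_def)
    have "c0 (\<lambda>i. int n * v i + - int n * v i) = c0 (\<lambda>i. int n * v i) + c0 (\<lambda>i. - int n * v i)"
      by (rule c0_add[OF w w2])
    then have h: "0 = of_nat n * c0 v + c0 (\<lambda>i. - int n * v i)" using c0_nat[OF v, of n] c0_zero by simp
    show ?thesis unfolding zn using h by (simp add: eq_neg_iff_add_eq_0 add.commute)
  qed
  have trunc: "c0 (\<lambda>i. if i < k then r i else 0) = (\<Sum>i<k. of_int (r i) * c0 (unitv i))"
    if r: "r \<in> lattice (2*m)" and k: "k \<le> 2*m" for r k
    using k
  proof (induction k)
    case 0 then show ?case by (simp add: c0_def)
  next
    case (Suc k)
    have t1: "(\<lambda>i. if i < k then r i else 0) \<in> lattice (2*m)" using r by (auto simp: lattice_def)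
    have t2: "(\<lambda>i. r k * unitv k i) \<in> lattice (2*m)" using Suc.prems by (auto simp: lattice_def unitv_def)
    have u: "unitv k \<in> lattice (2*m)" using Suc.prems by simp
    have "(\<lambda>i. if i < Suc k then r i else 0) = (\<lambda>i. (if i < k then r i else 0) + r k * unitv k i)"
      by (auto simp: fun_eq_iff unitv_def less_Suc_eq)
    then show ?case using c0_add[OF t1 t2] c0_int[OF u, of "r k"] Suc by simp
  qed
  define u where "u i = (if i < 2*m then c0 (unitv i) else 0)" for i
  show ?thesis
  proof (intro exI conjI allI impI ballI)
    fix i :: nat assume "2*m \<le> i" then show "u i = 0" by (simp add: u_def)
  next
    fix r assume r: "r \<in> lattice (2*m)" and rn: "r \<noteq> (\<lambda>_. 0)"
    have "(\<lambda>i. if i < 2*m then r i else 0) = r" using r by (auto simp: fun_eq_iff lattice_def)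
    then have "c0 r = (\<Sum>i<2*m. of_int (r i) * c0 (unitv i))" using trunc[OF r, of "2*m"] by simp
    also have "\<dots> = upair (2*m) u r" unfolding upair_def u_def by (simp add: mult.commute)
    finally show "c r = upair (2*m) u r" using rn by (simp add: c0_def)
  qed
qed



lemma diag:
  fixes E :: "'k::field_char_0 ham \<Rightarrow> 'k ham"
  assumes E: "E \<in> ham_derivations m" and fz: "\<And>k. k < 2*m \<Longrightarrow> fst (E (db k)) = (\<lambda>_. 0)"
  and r: "r \<in> lattice (2*m)" "r \<noteq> (\<lambda>_. 0)"
  shows "E (hb r) = ham_scale (fst (E (hb r)) r) (hb r)"
    and "\<And>k. k < 2*m \<Longrightarrow> upair (2*m) (snd (E (db k))) r = 0"
proof -
  let ?Y = "E (hb r)"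
  have hbC: "hb r \<in> ham_carrier m" using r by simp
  have Y: "?Y \<in> ham_carrier m" by (rule der_C[OF E hbC])
  have key: "ham_scale (of_int (r k)) ?Y = ham_add (\<lambda>t. upair (2*m) (snd (E (db k))) t * fst (hb r) t, \<lambda>_. 0)
               (\<lambda>t. of_int (t k) * fst ?Y t, \<lambda>_. 0)" if k: "k < 2*m" for k
  proof -
    have Edb: "E (db k) = (\<lambda>_. 0, snd (E (db k)))" using fz[OF k] by (simp add: prod_eq_iff)
    have dbC: "db k \<in> ham_carrier m" using k by simp
    have 1: "E (ham_bracket m (db k) (hb r)) = ham_add (ham_bracket m (E (db k)) (hb r)) (ham_bracket m (db k) ?Y)"
      by (rule der_leib[OF E dbC hbC])
    have b: "ham_bracket m (db k) (hb r) = ham_scale (of_int (r k)) (hb r :: 'k ham)" by (rule br_db_hb[OF k])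
    have 2: "E (ham_bracket m (db k) (hb r)) = ham_scale (of_int (r k)) ?Y"
      unfolding b by (rule der_scale[OF E hbC])
    have 3: "ham_bracket m (E (db k)) (hb r) = (\<lambda>t. upair (2*m) (snd (E (db k))) t * fst (hb r) t, \<lambda>_. 0)"
      using br_v_X[OF hbC, of "snd (E (db k))"] Edb by metis
    have 4: "ham_bracket m (db k) ?Y = (\<lambda>t. of_int (t k) * fst ?Y t, \<lambda>_. 0)"
      by (rule br_db_X[OF Y k])
    show ?thesis using 1 2 3 4 by simp
  qed
  have keyf: "of_int (r k) * fst ?Y t = upair (2*m) (snd (E (db k))) t * fst (hb r) t + of_int (t k) * fst ?Y t"
    if k: "k < 2*m" for k t
    using arg_cong[OF key[OF k], of "\<lambda>x. fst x t"] by (simp add: ham_scale_def ham_add_def)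
  have keys: "of_int (r k) * snd ?Y i = 0" if k: "k < 2*m" for k i
    using arg_cong[OF key[OF k], of "\<lambda>x. snd x i"] by (simp add: ham_scale_def ham_add_def)
  obtain k0 where k0: "k0 < 2*m" "r k0 \<noteq> 0" using nz_coord[OF r] by blast
  have sY: "snd ?Y i = 0" for i using keys[OF k0(1), of i] k0(2) by simp
  have fY: "fst ?Y t = 0" if tr: "t \<noteq> r" for t
  proof (cases "t \<in> lattice (2*m)")
    case True
    obtain k where k: "k < 2*m" "r k \<noteq> t k"
    proof (rule ccontr)
      assume "\<not> thesis"
      then have "\<forall>k<2*m. r k = t k" using that by blast
      moreover have "\<forall>k\<ge>2*m. r k = t k" using True r(1) by (simp add: lattice_def)
      ultimately have "r = t" by (metis ext not_less)
      with tr show False by simp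
    qed
    have "of_int (r k) * fst ?Y t = of_int (t k) * fst ?Y t"
      using keyf[OF k(1), of t] tr by (simp add: fst_hb)
    then have "(of_int (r k) - of_int (t k)) * fst ?Y t = 0" by (simp add: algebra_simps)
    then show ?thesis using k(2) by simp
  next
    case False
    then show ?thesis using carrier_fst_zero[OF Y] by blast
  qed
  show "E (hb r) = ham_scale (fst (E (hb r)) r) (hb r)"
  proof (rule prod_eqI)
    show "fst ?Y = fst (ham_scale (fst ?Y r) (hb r))"
    proof
      fix t show "fst ?Y t = fst (ham_scale (fst ?Y r) (hb r)) t"
        using fY[of t] r(2) by (cases "t = r") (auto simp: ham_scale_def fst_hb)
    qed
    show "snd ?Y = snd (ham_scale (fst ?Y r) (hb r))" using sY by (auto simp: ham_scale_def)
  qed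
  fix k assume k: "k < 2*m"
  show "upair (2*m) (snd (E (db k))) r = 0"
    using keyf[OF k, of r] r(2) by (simp add: fst_hb)
qed

lemma der_db_zero:
  fixes E :: "'k::field_char_0 ham \<Rightarrow> 'k ham"
  assumes E: "E \<in> ham_derivations m" and fz: "\<And>k. k < 2*m \<Longrightarrow> fst (E (db k)) = (\<lambda>_. 0)"
  and k: "k < 2*m"
  shows "E (db k) = ham_zero"
proof (rule prod_eqI)
  show "fst (E (db k)) = fst ham_zero" using fz[OF k] by (simp add: ham_zero_def)
  have C: "E (db k) \<in> ham_carrier m" using E k by simp
  show "snd (E (db k)) = snd ham_zero"
  proof
    fix j show "snd (E (db k)) j = snd ham_zero j"
    proof (cases "j < 2*m")
      case True
      then show ?thesis using diag(2)[OF E fz, of "unitv j" k] k by (simp add: ham_zero_def)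
    next
      case False
      then show ?thesis using carrierD(4)[OF C] by (simp add: ham_zero_def)
    qed
  qed
qed

lemma der_additive:
  fixes E :: "'k::field_char_0 ham \<Rightarrow> 'k ham"
  assumes E: "E \<in> ham_derivations m"
  and hE: "\<And>r. r \<in> lattice (2*m) \<Longrightarrow> r \<noteq> (\<lambda>_. 0) \<Longrightarrow> E (hb r) = ham_scale (c r) (hb r)"
  and r: "r \<in> lattice (2*m)" "r \<noteq> (\<lambda>_. 0)" and s: "s \<in> lattice (2*m)" "s \<noteq> (\<lambda>_. 0)"
  and rs: "(\<lambda>i. r i + s i) \<noteq> (\<lambda>_. 0)" and J: "Jpair m r s \<noteq> 0"
  shows "c (\<lambda>i. r i + s i) = c r + c s"
proof -
  let ?rs = "\<lambda>i. r i + s i" and ?J = "of_int (Jpair m r s) :: 'k"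
  have hr: "hb r \<in> ham_carrier m" and hs: "hb s \<in> ham_carrier m" and hrs: "hb ?rs \<in> ham_carrier m"
    using r s by simp_all
  have 1: "E (ham_bracket m (hb r) (hb s)) = ham_add (ham_bracket m (E (hb r)) (hb s)) (ham_bracket m (hb r) (E (hb s)))"
    by (rule der_leib[OF E hr hs])
  have b: "ham_bracket m (hb r) (hb s) = ham_scale ?J (hb ?rs)" by (rule br_hb_hb)
  have 2: "E (ham_bracket m (hb r) (hb s)) = ham_scale ?J (ham_scale (c ?rs) (hb ?rs))"
    unfolding b using der_scale[OF E hrs] hE[of ?rs] r s rs by simp
  have 3: "ham_add (ham_bracket m (E (hb r)) (hb s)) (ham_bracket m (hb r) (E (hb s))) =
     ham_add (ham_scale (c r) (ham_scale ?J (hb ?rs))) (ham_scale (c s) (ham_scale ?J (hb ?rs)))"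
  proof -
    have "ham_bracket m (E (hb r)) (hb s) = ham_scale (c r) (ham_scale ?J (hb ?rs))"
      unfolding hE[OF r] br_scale_left[OF hr] b ..
    moreover have "ham_bracket m (hb r) (E (hb s)) = ham_scale (c s) (ham_scale ?J (hb ?rs))"
      unfolding hE[OF s] br_scale_right b ..
    ultimately show ?thesis by simp
  qed
  have "ham_scale ?J (ham_scale (c ?rs) (hb ?rs)) = ham_add (ham_scale (c r) (ham_scale ?J (hb ?rs))) (ham_scale (c s) (ham_scale ?J (hb ?rs)))"
    using 1 2 3 by simp
  from arg_cong[OF this, of "\<lambda>x. fst x ?rs"]
  have h: "?J * c ?rs = c r * ?J + c s * ?J" using rs by (simp add: ham_scale_def ham_add_def fst_hb)
  have J0: "?J \<noteq> 0" using J by simp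
  have "?J * c ?rs = ?J * (c r + c s)" using h by (simp add: algebra_simps)
  then show ?thesis using J0 by simp
qed

lemma der_eq:
  assumes E: "E \<in> ham_derivations m" and F: "F \<in> ham_derivations m"
  and h: "\<And>r. r \<in> lattice (2*m) \<Longrightarrow> r \<noteq> (\<lambda>_. 0) \<Longrightarrow> E (hb r) = F (hb r)"
  and d: "\<And>i. i < 2*m \<Longrightarrow> E (db i) = F (db i)"
  shows "E = F"
proof
  fix y show "E y = F y"
  proof (cases "y \<in> ham_carrier m")
    case True
    then show ?thesis
    proof (induction y rule: span_induct)
      case zero then show ?case using der_zero[OF E] der_zero[OF F] by simp
    next
      case (hb r a y)
      then show ?case using h[of r] der_add[OF E, of y] der_add[OF F, of y] der_scale[OF E, of "hb r" a]
        der_scale[OF F, of "hb r" a] by simp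
    next
      case (db i a y)
      then show ?case using d[of i] der_add[OF E, of y] der_add[OF F, of y] der_scale[OF E, of "db i" a]
        der_scale[OF F, of "db i" a] by simp
    qed
  next
    case False
    then show ?thesis using der_out[OF E] der_out[OF F] by simp
  qed
qed



lemma surj_ad:
  fixes D :: "'k::field_char_0 ham \<Rightarrow> 'k ham"
  assumes D: "D \<in> ham_derivations m"
  shows "\<exists>x\<in>ham_carrier m. D = ad m x"
proof -
  define f where "f i = fst (D (db i))" for i
  have DdbC: "D (db i) \<in> ham_carrier m" if "i < 2*m" for i using D that by simp
  have rel: "of_int (t j) * f i t = of_int (t i) * f j t" if i: "i < 2*m" and j: "j < 2*m" for i j t
  proof -
    have 1: "D (ham_bracket m (db i) (db j)) = ham_add (ham_bracket m (D (db i)) (db j)) (ham_bracket m (db i) (D (db j)))"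
      by (rule der_leib[OF D]) (use i j in simp_all)
    have 2: "D (ham_bracket m (db i) (db j)) = ham_zero" unfolding br_db_db by (rule der_zero[OF D])
    have "ham_zero = ham_add (\<lambda>t. - of_int (t j) * f i t, \<lambda>_. 0) (\<lambda>t. of_int (t i) * f j t, \<lambda>_. 0)"
      using 1 2 br_X_db[OF DdbC[OF i] j] br_db_X[OF DdbC[OF j] i] by (simp add: f_def)
    from arg_cong[OF this, of "\<lambda>x. fst x t"]
    show ?thesis by (simp add: ham_zero_def ham_add_def)
  qed
  define K where "K t = (LEAST k. t k \<noteq> 0)" for t :: "nat \<Rightarrow> int"
  have Kp: "K t < 2*m \<and> t (K t) \<noteq> 0" if T: "t \<in> lattice (2*m)" "t \<noteq> (\<lambda>_. 0)" for t
  proof -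
    obtain k where k: "k < 2*m" "t k \<noteq> 0" using nz_coord[OF T] by blast
    have "t (K t) \<noteq> 0" unfolding K_def using k(2) by (rule LeastI)
    moreover have "K t \<le> k" unfolding K_def using k(2) by (rule Least_le)
    ultimately show ?thesis using k(1) by simp
  qed
  define g where "g t = (if t \<in> lattice (2*m) \<and> t \<noteq> (\<lambda>_. 0) then f (K t) t / of_int (t (K t)) else 0)" for t
  have fg: "f i t = of_int (t i) * g t" if i: "i < 2*m" for i t
  proof (cases "t \<in> lattice (2*m) \<and> t \<noteq> (\<lambda>_. 0)")
    case True
    then have K: "K t < 2*m" "t (K t) \<noteq> 0" using Kp by auto
    have "of_int (t (K t)) * f i t = of_int (t i) * f (K t) t" using rel[OF i K(1)] .
    then show ?thesis using True K(2) by (simp add: g_def field_simps)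
  next
    case False
    have f0: "f i t = 0" unfolding f_def by (rule carrier_fst_zero[OF DdbC[OF i]]) (use False in auto)
    have g0: "g t = 0" unfolding g_def using False by (rule if_not_P)
    show ?thesis by (simp add: f0 g0)
  qed
  define x0 :: "'k ham" where "x0 = (\<lambda>t. - g t, \<lambda>_. 0)"
  have x0C: "x0 \<in> ham_carrier m"
  proof (rule carrierI)
    have "{r. fst x0 r \<noteq> 0} \<subseteq> (\<Union>i<2*m. {r. f i r \<noteq> 0})"
    proof
      fix t assume "t \<in> {r. fst x0 r \<noteq> 0}"
      then have gt: "g t \<noteq> 0" by (simp add: x0_def)
      then have T: "t \<in> lattice (2*m) \<and> t \<noteq> (\<lambda>_. 0)" by (simp add: g_def split: if_splits)
      then have "f (K t) t \<noteq> 0" using gt by (simp add: g_def)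
      then show "t \<in> (\<Union>i<2*m. {r. f i r \<noteq> 0})" using Kp T by blast
    qed
    moreover have "finite (\<Union>i<2*m. {r. f i r \<noteq> 0})"
      using carrierD(1)[OF DdbC] by (auto simp: f_def)
    ultimately show "finite {r. fst x0 r \<noteq> 0}" by (rule finite_subset)
    show "fst x0 r \<noteq> 0 \<Longrightarrow> r \<in> lattice (2*m) \<and> r \<noteq> (\<lambda>_. 0)" for r
      by (simp add: x0_def g_def split: if_splits)
    show "snd x0 i = 0" for i by (simp add: x0_def)
  qed
  define E where "E = der_add m (der_scale m 1 D) (der_scale m (-1) (ad m x0))"
  have EDer: "E \<in> ham_derivations m" unfolding E_def by (rule der_comb[OF D ad_der[OF x0C]])
  have Ey: "E y = ham_add (D y) (ham_scale (-1) (ham_bracket m x0 y))" if "y \<in> ham_carrier m" for y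
    using that by (simp add: E_def der_add_def der_scale_def ad_def)
  have fz: "fst (E (db k)) = (\<lambda>_. 0)" if k: "k < 2*m" for k
  proof
    fix t
    have "fst (E (db k)) t = f k t - fst (ham_bracket m x0 (db k)) t"
      using Ey[of "db k"] k by (simp add: ham_add_def ham_scale_def f_def)
    also have "\<dots> = 0" using br_X_db[OF x0C k] fg[OF k, of t] by (simp add: x0_def)
    finally show "fst (E (db k)) t = 0" .
  qed
  define c where "c r = fst (E (hb r)) r" for r
  have hE: "E (hb r) = ham_scale (c r) (hb r)" if "r \<in> lattice (2*m)" "r \<noteq> (\<lambda>_. 0)" for r
    unfolding c_def by (rule diag(1)[OF EDer fz that])
  have dE: "E (db k) = ham_zero" if "k < 2*m" for k by (rule der_db_zero[OF EDer fz that])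
  have cadd: "c (\<lambda>i. r i + s i) = c r + c s"
    if "r \<in> lattice (2*m)" "s \<in> lattice (2*m)" "r \<noteq> (\<lambda>_. 0)" "s \<noteq> (\<lambda>_. 0)" "(\<lambda>i. r i + s i) \<noteq> (\<lambda>_. 0)" for r s
    by (rule full_additive[OF der_additive[OF EDer hE]]) (use that in auto)
  obtain u where u: "\<forall>i\<ge>2*m. u i = 0" "\<forall>r\<in>lattice (2*m). r \<noteq> (\<lambda>_. 0) \<longrightarrow> c r = upair (2*m) u r"
    using c_linear[of m c] cadd by blast
  define v :: "'k ham" where "v = (\<lambda>_. 0, u)"
  have vC: "v \<in> ham_carrier m" by (rule carrierI) (use u(1) in \<open>auto simp: v_def\<close>)
  have Ead: "E = ad m v"
  proof (rule der_eq[OF EDer ad_der[OF vC]])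
    fix r assume r: "r \<in> lattice (2*m)" "r \<noteq> (\<lambda>_. 0)"
    have hbC: "(hb r :: 'k ham) \<in> ham_carrier m" using r by simp
    have "ad m v (hb r) = (\<lambda>t. upair (2*m) u t * fst (hb r) t, \<lambda>_. 0)"
      using br_v_X[OF hbC, of u] hbC by (simp add: ad_def v_def)
    also have "\<dots> = ham_scale (c r) (hb r)"
    proof (rule prod_eqI, rule ext)
      have cr: "c r = upair (2*m) u r" using u(2) r by blast
      fix t show "fst (\<lambda>t. upair (2*m) u t * fst (hb r) t, \<lambda>_. 0) t = fst (ham_scale (c r) (hb r)) t"
        by (cases "t = r") (simp_all add: ham_scale_def fst_hb cr)
    qed (simp add: ham_scale_def)
    finally show "E (hb r) = ad m v (hb r)" using hE[OF r] by simp
  next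
    fix i assume i: "i < 2*m"
    have dbC: "(db i :: 'k ham) \<in> ham_carrier m" using i by simp
    have "ad m v (db i) = (\<lambda>t. upair (2*m) u t * fst (db i) t, \<lambda>_. 0)"
      using br_v_X[OF dbC, of u] dbC by (simp add: ad_def v_def)
    also have "\<dots> = ham_zero" by (simp add: ham_zero_def)
    finally show "E (db i) = ad m v (db i)" using dE[OF i] by simp
  qed
  have "D = ad m (ham_add x0 v)"
  proof
    fix y show "D y = ad m (ham_add x0 v) y"
    proof (cases "y \<in> ham_carrier m")
      case True
      have h: "ham_bracket m v y = ham_add (D y) (ham_scale (-1) (ham_bracket m x0 y))"
        using Ey[OF True] fun_cong[OF Ead, of y] True by (simp add: ad_def)
      have "D y = ham_add (ham_bracket m x0 y) (ham_bracket m v y)"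
        unfolding h by (simp add: ham_add_def ham_scale_def prod_eq_iff)
      then show ?thesis using True x0C vC by (simp add: ad_def)
    next
      case False
      then show ?thesis using der_out[OF D False] by (simp add: ad_def)
    qed
  qed
  moreover have "ham_add x0 v \<in> ham_carrier m" using x0C vC by simp
  ultimately show ?thesis by blast
qed

theorem theorem4p6:
  fixes m :: nat
  assumes "m \<ge> 1"
  shows "\<exists>\<phi> :: ((('k::{alg_closed_field, field_char_0}) ham \<Rightarrow> 'k ham) \<Rightarrow> 'k ham).
           der_ham_iso m \<phi>"
proof -
  let ?C = "ham_carrier m :: 'k ham set"
  have inj: "inj_on (ad m) ?C" unfolding inj_on_def using ad_inj by blast
  have img: "ad m ` ?C = ham_derivations m"
  proof
    show "ad m ` ?C \<subseteq> ham_derivations m" using ad_der by auto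
    show "ham_derivations m \<subseteq> ad m ` ?C" using surj_ad by blast
  qed
  have bij: "bij_betw (ad m) ?C (ham_derivations m)" by (simp add: bij_betw_def inj img)
  define \<phi> where "\<phi> = inv_into ?C (ad m)"
  have bij2: "bij_betw \<phi> (ham_derivations m) ?C" unfolding \<phi>_def by (rule bij_betw_inv_into[OF bij])
  have inv: "\<phi> (ad m x) = x" if "x \<in> ?C" for x unfolding \<phi>_def by (rule inv_into_f_f[OF inj that])
  have lin: "\<phi> (der_add m (der_scale m a D) (der_scale m b E)) = ham_add (ham_scale a (\<phi> D)) (ham_scale b (\<phi> E))"
    if D: "D \<in> ham_derivations m" and E: "E \<in> ham_derivations m" for D E a b
  proof -
    obtain x where x: "x \<in> ?C" "D = ad m x" using surj_ad[OF D] by blast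
    obtain y where y: "y \<in> ?C" "E = ad m y" using surj_ad[OF E] by blast
    show ?thesis unfolding x(2) y(2) der_ad_comb[OF x(1) y(1)] using x(1) y(1) by (simp add: inv)
  qed
  have br: "\<phi> (der_bracket m D E) = ham_bracket m (\<phi> D) (\<phi> E)"
    if D: "D \<in> ham_derivations m" and E: "E \<in> ham_derivations m" for D E
  proof -
    obtain x where x: "x \<in> ?C" "D = ad m x" using surj_ad[OF D] by blast
    obtain y where y: "y \<in> ?C" "E = ad m y" using surj_ad[OF E] by blast
    show ?thesis unfolding x(2) y(2) der_ad_bracket[OF x(1) y(1)] using x(1) y(1) by (simp add: inv)
  qed
  have "der_ham_iso m \<phi>" unfolding der_ham_iso_def using bij2 lin br by blast
  then show ?thesis by blast
qed


end
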